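(* Let $K\ge 0$ be an integer and, for $k=0,1,\dots,K$, let $w_k=2^{k-K}$ and let $\mathcal{G}^k$ be a finite subset of the lattice $w_k\mathbb{Z}^3$, with a real coefficient $\lambda_{\boldsymbol{g}}$ attached to each $\boldsymbol{g}\in\mathcal{G}^k$ (points of different levels $k$ are treated as distinct even if they coincide in position). Define $f:\mathbb{R}^3\to\mathbb{R}$ by $$f(\boldsymbol{v})=\sum_{k=0}^K\sum_{\boldsymbol{g}\in\mathcal{G}^k}\lambda_{\boldsymbol{g}}\,\boldsymbol{B}\!\left(\frac{\boldsymbol{v}-\boldsymbol{g}}{w_k}\right),\qquad \boldsymbol{B}(x,y,z)=B(x)B(y)B(z),$$ where $B(t)=1+t$ for $t\in[-1,0]$, $B(t)=1-t$ for $t\in(0,1]$, and $B(t)=0$ otherwise. Let $\mathcal{M}\subset\mathbb{R}^3$ be a polygonal mesh surface, i.e. the union of finitely many non-degenerate triangles. Subdivide each triangle of $\mathcal{M}$ into finitely many non-degenerate sub-triangles, each of which is contained in a single depth-0 cell (a closed cube of the form $\prod_{i=1}^3[w_0a_i,w_0(a_i+1)]$ with $a_i\in\mathbb{Z}$). For each such sub-triangle $T$ with vertices $\boldsymbol{v}_1,\boldsymbol{v}_2,\boldsymbol{v}_3$, let $H_T(\alpha,\beta)=f\big(\boldsymbol{v}_1+\alpha(\boldsymbol{v}_2-\boldsymbol{v}_1)+\beta(\boldsymbol{v}_3-\boldsymbol{v}_1)\big)$ on $D=\{(\alpha,\beta):\alpha,\beta\ge0,\ \alpha+\beta\le1\}$,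 and let the candidate set $\boldsymbol{C}_T\subset T$ consist of: (1) the points of $T$ corresponding to $(\alpha,\beta)\in D$ with $\nabla_{(\alpha,\beta)}H_T(\alpha,\beta)=\boldsymbol{0}$; (2) the points on the three edges of $T$ at which the derivative of the restriction of $H_T$ to that edge (i.e. of the univariate function $\hat H_T(t)$ obtained by imposing $\alpha=0$, $\beta=0$, or $\alpha+\beta=1$) vanishes; and (3) the three vertices of $T$. Let $\mathcal{C}$ be the union of the sets $\boldsymbol{C}_T$ over all sub-triangles $T$, and set $$\epsilon_1=\min_{\boldsymbol{v}\in\mathcal{C}}f(\boldsymbol{v}),\qquad \epsilon_2=\max_{\boldsymbol{v}\in\mathcal{C}}f(\boldsymbol{v}).$$ Then the thin-shell space $\{\boldsymbol{x}\in\mathbb{R}^3:\epsilon_1\le f(\boldsymbol{x})\le\epsilon_2\}$ rigorously wraps $\mathcal{M}$, i.e. $\epsilon_1\le f(\boldsymbol{v})\le\epsilon_2$ for every $\boldsymbol{v}\in\mathcal{M}$.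
   Context: In the paper, $f$ is a first-degree tri-variate tensor-product B-spline defined on the grid points of a sparse voxel octree of height $K$ over the model (depth $0$ is the finest level, with cell width $2^{-K}$ for a model normalized to the unit box; depth $k$ has cell width $w_k$); its coefficients are obtained by fitting the signed distance function of $\mathcal{M}$ at the grid points, but the conclusion concerns only the function $f$ of the stated form. The "thin shell" of $\mathcal{M}$ is the region between the level sets $f=\epsilon_1$ and $f=\epsilon_2$. *)

theory Defs
  imports "HOL-Analysis.Analysis"
begin

type_synonym pt = "real^3"
type_synonym tri = "pt \<times> pt \<times> pt"

definition hatB :: "real \<Rightarrow> real" where
  "hatB t = (if -1 \<le> t \<and> t \<le> 0 then 1 + t else if 0 < t \<and> t \<le> 1 then 1 - t else 0)"

definition triB :: "pt \<Rightarrow> real" where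
  "triB x = hatB (x$1) * hatB (x$2) * hatB (x$3)"

definition cellw :: "nat \<Rightarrow> nat \<Rightarrow> real" where
  "cellw K k = 2 powr (real k - real K)"

definition on_lattice :: "real \<Rightarrow> pt \<Rightarrow> bool" where
  "on_lattice w g = (\<forall>i. \<exists>a::int. g$i = w * of_int a)"

text \<open>The function f; coefficients are indexed by level and grid point,
  so points of different levels are distinct.\<close>
definition spline :: "nat \<Rightarrow> (nat \<Rightarrow> pt set) \<Rightarrow> (nat \<Rightarrow> pt \<Rightarrow> real) \<Rightarrow> pt \<Rightarrow> real" where
  "spline K G lam v = (\<Sum>k\<le>K. \<Sum>g\<in>G k. lam k g * triB ((1 / cellw K k) *\<^sub>R (v - g)))"

definition cell0 :: "nat \<Rightarrow> int^3 \<Rightarrow> pt set" where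
  "cell0 K a = {x. \<forall>i. cellw K 0 * of_int (a$i) \<le> x$i \<and> x$i \<le> cellw K 0 * (of_int (a$i) + 1)}"

definition triangle :: "tri \<Rightarrow> pt set" where
  "triangle T = (case T of (v1, v2, v3) \<Rightarrow> convex hull {v1, v2, v3})"

definition nondegenerate :: "tri \<Rightarrow> bool" where
  "nondegenerate T = (case T of (v1, v2, v3) \<Rightarrow> \<not> collinear {v1, v2, v3})"

definition tri_param :: "tri \<Rightarrow> real \<Rightarrow> real \<Rightarrow> pt" where
  "tri_param T \<alpha> \<beta> = (case T of (v1, v2, v3) \<Rightarrow> v1 + \<alpha> *\<^sub>R (v2 - v1) + \<beta> *\<^sub>R (v3 - v1))"

definition paramD :: "(real \<times> real) set" where
  "paramD = {(\<alpha>, \<beta>). 0 \<le> \<alpha> \<and> 0 \<le> \<beta> \<and> \<alpha> + \<beta> \<le> 1}"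

text \<open>Candidate set C_T for a sub-triangle T, for the function f.
  H_T(alpha,beta) = f (tri_param T alpha beta). Gradient / derivative are taken
  within the (closed) parameter domain.\<close>
definition candidates :: "(pt \<Rightarrow> real) \<Rightarrow> tri \<Rightarrow> pt set" where
  "candidates f T =
     {tri_param T \<alpha> \<beta> | \<alpha> \<beta>. (\<alpha>, \<beta>) \<in> paramD \<and>
        ((\<lambda>p. f (tri_param T (fst p) (snd p))) has_derivative (\<lambda>_. 0)) (at (\<alpha>, \<beta>) within paramD)}
   \<union> {tri_param T 0 t | t. t \<in> {0..1} \<and>
        ((\<lambda>s. f (tri_param T 0 s)) has_real_derivative 0) (at t within {0..1})}
   \<union> {tri_param T t 0 | t. t \<in> {0..1} \<and>
        ((\<lambda>s. f (tri_param T s 0)) has_real_derivative 0) (at t within {0..1})}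
   \<union> {tri_param T t (1 - t) | t. t \<in> {0..1} \<and>
        ((\<lambda>s. f (tri_param T s (1 - s))) has_real_derivative 0) (at t within {0..1})}
   \<union> (case T of (v1, v2, v3) \<Rightarrow> {v1, v2, v3})"

end

theory Submission
  imports Defs
begin

definition hc :: "int \<Rightarrow> real" where "hc n = (if n = -1 \<or> n = 0 then 1 else 0)"
definition hsl :: "int \<Rightarrow> real" where "hsl n = (if n = -1 then 1 else if n = 0 then -1 else 0)"

lemma hatB_piece:
  assumes "of_int n \<le> t" "t \<le> of_int n + 1"
  shows "hatB t = hc n + hsl n * t"
proof -
  consider "n = -1" | "n = 0" | "n \<ge> 1" | "n \<le> -2" by linarith
  then show ?thesis
  proof cases
    case 1 then show ?thesis using assms by (auto simp: hatB_def hc_def hsl_def)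
  next
    case 2 then show ?thesis using assms by (auto simp: hatB_def hc_def hsl_def)
  next
    case 3
    then have "(1::real) \<le> of_int n" by simp
    then show ?thesis using assms 3 by (auto simp: hatB_def hc_def hsl_def)
  next
    case 4
    then have "of_int n \<le> (-2::real)" by simp
    then show ?thesis using assms 4 by (auto simp: hatB_def hc_def hsl_def)
  qed
qed

lemma hatB_bounds: "0 \<le> hatB t" "hatB t \<le> 1"
  by (auto simp: hatB_def)

lemma triB_abs: "\<bar>triB x\<bar> \<le> 1"
  unfolding triB_def using hatB_bounds
  by (simp add: abs_mult mult_le_one)

lemma spline_bound: "\<bar>spline K G lam v\<bar> \<le> (\<Sum>k\<le>K. \<Sum>g\<in>G k. \<bar>lam k g\<bar>)"
proof -
  have "\<bar>spline K G lam v\<bar> \<le> (\<Sum>k\<le>K. \<bar>\<Sum>g\<in>G k. lam k g * triB ((1 / cellw K k) *\<^sub>R (v - g))\<bar>)"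
    unfolding spline_def by (rule sum_abs)
  also have "\<dots> \<le> (\<Sum>k\<le>K. \<Sum>g\<in>G k. \<bar>lam k g\<bar>)"
  proof (rule sum_mono)
    fix k
    have "\<bar>\<Sum>g\<in>G k. lam k g * triB ((1 / cellw K k) *\<^sub>R (v - g))\<bar> \<le> (\<Sum>g\<in>G k. \<bar>lam k g * triB ((1 / cellw K k) *\<^sub>R (v - g))\<bar>)"
      by (rule sum_abs)
    also have "\<dots> \<le> (\<Sum>g\<in>G k. \<bar>lam k g\<bar>)"
      by (rule sum_mono) (simp add: abs_mult mult_left_le triB_abs)
    finally show "\<bar>\<Sum>g\<in>G k. lam k g * triB ((1 / cellw K k) *\<^sub>R (v - g))\<bar> \<le> (\<Sum>g\<in>G k. \<bar>lam k g\<bar>)" .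
  qed
  finally show ?thesis .
qed

lemma floor_step:
  fixes a :: int and m :: int
  assumes "m > 0"
  shows "(of_int a + 1) / of_int m \<le> of_int \<lfloor>of_int a / (of_int m::real)\<rfloor> + (1::real)"
proof -
  have fl: "\<lfloor>of_int a / (of_int m::real)\<rfloor> = a div m" by (rule floor_divide_of_int_eq)
  have e: "m * (a div m) + a mod m = a" by (rule mult_div_mod_eq)
  have "a mod m < m" using assms by simp
  hence "a + 1 \<le> m * (a div m) + m" using e by linarith
  hence "a + 1 \<le> m * (a div m + 1)" by (simp add: distrib_left)
  hence "real_of_int (a + 1) \<le> of_int m * (of_int (a div m) + 1)"
    by (metis of_int_add of_int_le_iff of_int_mult of_int_1)
  hence "(of_int a + 1) / of_int m \<le> of_int (a div m) + (1::real)"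
    using assms by (simp add: divide_le_eq mult.commute)
  then show ?thesis using fl by simp
qed


lemma cellw_pos: "cellw K k > 0" by (simp add: cellw_def)
lemma cellw_nz: "cellw K k \<noteq> 0" using cellw_pos[of K k] by linarith

lemma cellw_rel: "cellw K 0 * 2 ^ k = cellw K k"
proof -
  have "cellw K 0 * 2 ^ k = 2 powr (- real K) * 2 powr real k"
    by (simp add: cellw_def powr_realpow)
  also have "\<dots> = 2 powr (real k - real K)" by (simp add: powr_add[symmetric])
  finally show ?thesis by (simp add: cellw_def)
qed

lemma cell_piece:
  assumes x: "x \<in> cell0 K a" and g: "on_lattice (cellw K k) g"
    and n_def: "n = \<lfloor>(cellw K 0 * of_int (a$i) - g$i) / cellw K k\<rfloor>"
  shows "hatB ((x$i - g$i) / cellw K k) = hc n + hsl n * ((x$i - g$i) / cellw K k)"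
proof -
  define w where "w = cellw K k"
  define w0 where "w0 = cellw K 0"
  define m :: int where "m = 2 ^ k"
  have wpos: "w > 0" "w0 > 0" by (auto simp: w_def w0_def cellw_pos)
  have mpos: "m > 0" by (simp add: m_def)
  have wm: "w = w0 * of_int m" by (simp add: w_def w0_def m_def cellw_rel)
  obtain b :: int where gb: "g$i = w * of_int b" using g unfolding on_lattice_def w_def by blast
  have xl: "w0 * of_int (a$i) \<le> x$i" and xu: "x$i \<le> w0 * (of_int (a$i) + 1)"
    using x unfolding cell0_def w0_def by auto
  have e1: "(w0 * of_int (a$i) - g$i) / w = of_int (a$i) / of_int m - of_int b"
    using wpos mpos by (simp add: gb wm field_simps)
  have nd: "n = \<lfloor>of_int (a$i) / (of_int m :: real)\<rfloor> - b"
    unfolding n_def using e1 by (simp add: w_def w0_def)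
  define t where "t = (x$i - g$i) / w"
  have tl: "of_int (a$i) / of_int m - of_int b \<le> t"
    unfolding t_def e1[symmetric] using wpos xl by (simp add: divide_right_mono)
  have tu: "t \<le> (of_int (a$i) + 1) / of_int m - of_int b"
  proof -
    have "t \<le> (w0 * (of_int (a$i) + 1) - g$i) / w"
      unfolding t_def using wpos xu by (simp add: divide_right_mono)
    also have "\<dots> = (of_int (a$i) + 1) / of_int m - of_int b"
      using wpos mpos by (simp add: gb wm field_simps)
    finally show ?thesis .
  qed
  have "of_int n \<le> t"
    using tl nd by (simp add: of_int_floor_le) (meson floor_le_iff le_floor_iff order_trans of_int_floor_le diff_right_mono)
  moreover have "t \<le> of_int n + 1"
    using tu floor_step[OF mpos, of "a$i"] nd by simp
  ultimately show ?thesis by (simp add: hatB_piece t_def w_def)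
qed


definition pc :: "nat \<Rightarrow> int^3 \<Rightarrow> nat \<Rightarrow> pt \<Rightarrow> 3 \<Rightarrow> pt \<Rightarrow> real" where
  "pc K a k g i x = (let n = \<lfloor>(cellw K 0 * of_int (a$i) - g$i) / cellw K k\<rfloor> in
      hc n + hsl n * ((x$i - g$i) / cellw K k))"

definition Fsp :: "nat \<Rightarrow> (nat \<Rightarrow> pt set) \<Rightarrow> (nat \<Rightarrow> pt \<Rightarrow> real) \<Rightarrow> int^3 \<Rightarrow> pt \<Rightarrow> real" where
  "Fsp K G lam a x = (\<Sum>k\<le>K. \<Sum>g\<in>G k. lam k g * (pc K a k g 1 x * pc K a k g 2 x * pc K a k g 3 x))"

lemma pc_diff: "pc K a k g i differentiable (at x)"
proof -
  have "((\<lambda>x::pt. x$i) has_derivative (\<lambda>h. h$i)) (at x)"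
    by (simp add: bounded_linear_imp_has_derivative bounded_linear_vec_nth)
  then have "(\<lambda>x::pt. x$i) differentiable (at x)" by (rule differentiableI)
  then show ?thesis unfolding pc_def Let_def
    by (intro derivative_intros) (auto simp: cellw_nz)
qed

lemma Fsp_diff:
  assumes "\<forall>k\<le>K. finite (G k)"
  shows "Fsp K G lam a differentiable (at x)"
  unfolding Fsp_def using assms
  by (intro differentiable_sum ballI differentiable_mult differentiable_const pc_diff) auto

lemma spline_Fsp:
  assumes "\<forall>k\<le>K. \<forall>g\<in>G k. on_lattice (cellw K k) g" "x \<in> cell0 K a"
  shows "spline K G lam x = Fsp K G lam a x"
  unfolding spline_def Fsp_def
proof (intro sum.cong refl)
  fix k g assume k: "k \<in> {..K}" and g: "g \<in> G k"
  have lat: "on_lattice (cellw K k) g" using assms(1) k g by auto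
  have "\<And>i. hatB (((1 / cellw K k) *\<^sub>R (x - g))$i) = pc K a k g i x"
    unfolding pc_def Let_def
    using cell_piece[OF assms(2) lat refl] by simp
  then show "lam k g * triB ((1 / cellw K k) *\<^sub>R (x - g)) =
         lam k g * (pc K a k g 1 x * pc K a k g 2 x * pc K a k g 3 x)"
    unfolding triB_def by simp
qed


lemma tri_param_in:
  assumes "(\<alpha>, \<beta>) \<in> paramD" shows "tri_param T \<alpha> \<beta> \<in> triangle T"
proof -
  obtain v1 v2 v3 where T: "T = (v1, v2, v3)" by (cases T) auto
  have "tri_param T \<alpha> \<beta> = (1 - \<alpha> - \<beta>) *\<^sub>R v1 + \<alpha> *\<^sub>R v2 + \<beta> *\<^sub>R v3"
    by (simp add: T tri_param_def algebra_simps)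
  moreover have "0 \<le> 1 - \<alpha> - \<beta>" "0 \<le> \<alpha>" "0 \<le> \<beta>" using assms by (auto simp: paramD_def)
  moreover have "(1 - \<alpha> - \<beta>) *\<^sub>R v1 + \<alpha> *\<^sub>R v2 + \<beta> *\<^sub>R v3 \<in> convex hull {v1, v2, v3}"
    unfolding convex_hull_3 using calculation(2-4)
    by (intro CollectI exI[of _ "1 - \<alpha> - \<beta>"] exI[of _ \<alpha>] exI[of _ \<beta>]) auto
  ultimately show ?thesis unfolding triangle_def T by simp
qed

lemma triangle_param:
  assumes "v \<in> triangle T" shows "\<exists>\<alpha> \<beta>. (\<alpha>, \<beta>) \<in> paramD \<and> v = tri_param T \<alpha> \<beta>"
proof -
  obtain v1 v2 v3 where T: "T = (v1, v2, v3)" by (cases T) auto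
  obtain u x y where uxy: "0 \<le> u" "0 \<le> x" "0 \<le> y" "u + x + y = 1" "v = u *\<^sub>R v1 + x *\<^sub>R v2 + y *\<^sub>R v3"
    using assms unfolding triangle_def T convex_hull_3 by auto
  have "v = tri_param T x y"
  proof -
    have "u = 1 - x - y" using uxy by simp
    then have "v = (1 - x - y) *\<^sub>R v1 + x *\<^sub>R v2 + y *\<^sub>R v3" using uxy(5) by simp
    then show ?thesis by (simp add: T tri_param_def algebra_simps)
  qed
  moreover have "(x, y) \<in> paramD" using uxy by (auto simp: paramD_def)
  ultimately show ?thesis by blast
qed

lemma paramD_compact: "compact paramD"
proof -
  have eq: "paramD = ({0..1} \<times> {0..1}) \<inter> {p. fst p + snd p \<le> 1}"
    by (auto simp: paramD_def)
  have cl: "closed {p::real\<times>real. fst p + snd p \<le> 1}"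
    by (intro closed_Collect_le continuous_intros)
  show ?thesis unfolding eq
    by (rule compact_Int_closed[OF compact_Times[OF compact_Icc compact_Icc] cl])
qed

lemma diff2:
  assumes "\<And>x. F differentiable (at x)"
  shows "(\<lambda>q. F (tri_param T (fst q) (snd q))) differentiable (at q)"
proof -
  obtain v1 v2 v3 where T: "T = (v1, v2, v3)" by (cases T) auto
  have "(\<lambda>q::real\<times>real. v1 + fst q *\<^sub>R (v2 - v1) + snd q *\<^sub>R (v3 - v1)) differentiable (at q)"
    by (intro derivative_intros differentiableI[OF has_derivative_fst[OF has_derivative_ident]]
        differentiableI[OF has_derivative_snd[OF has_derivative_ident]])
  from differentiable_chain_at[OF this assms]
  show ?thesis by (simp add: T tri_param_def o_def)
qed

lemma diff1:
  assumes "\<And>x. F differentiable (at x)"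
  shows "(\<lambda>s. F (tri_param T (c1 + d1 * s) (c2 + d2 * s))) differentiable (at s)"
proof -
  obtain v1 v2 v3 where T: "T = (v1, v2, v3)" by (cases T) auto
  have "(\<lambda>s::real. v1 + (c1 + d1 * s) *\<^sub>R (v2 - v1) + (c2 + d2 * s) *\<^sub>R (v3 - v1)) differentiable (at s)"
    by (intro derivative_intros)
  from differentiable_chain_at[OF this assms]
  show ?thesis by (simp add: T tri_param_def o_def)
qed

lemma edge_fermat:
  fixes g h :: "real \<Rightarrow> real"
  assumes "g differentiable (at t)" "0 < t" "t < 1"
    and ext: "(\<forall>s\<in>{0..1}. h s \<le> h t) \<or> (\<forall>s\<in>{0..1}. h t \<le> h s)"
    and eq: "\<And>s. s \<in> {0..1} \<Longrightarrow> h s = g s"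
  shows "(h has_real_derivative 0) (at t within {0..1})"
proof -
  obtain D where D: "(g has_derivative D) (at t)" using assms(1) by (auto simp: differentiable_def)
  have tin: "t \<in> {0..1}" using assms by auto
  have "(\<forall>s\<in>{0<..<1}. g s \<le> g t) \<or> (\<forall>s\<in>{0<..<1}. g t \<le> g s)"
    using ext eq tin by auto
  then have "D = (\<lambda>v. 0)"
    using differential_zero_maxmin[OF _ open_greaterThanLessThan D] assms(2,3) by auto
  then have "(g has_derivative (\<lambda>v. 0)) (at t within {0..1})"
    using D has_derivative_at_withinI by blast
  then have "(h has_derivative (\<lambda>v. 0)) (at t within {0..1})"
    using has_derivative_transform[of t "{0..1}" h g] tin eq by blast
  moreover have "(*) (0::real) = (\<lambda>v. 0)" by auto
  ultimately show ?thesis by (simp add: has_field_derivative_def)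
qed

lemma int_fermat:
  fixes g h :: "real \<times> real \<Rightarrow> real"
  assumes "g differentiable (at p)" "0 < fst p" "0 < snd p" "fst p + snd p < 1"
    and ext: "(\<forall>q\<in>paramD. h q \<le> h p) \<or> (\<forall>q\<in>paramD. h p \<le> h q)"
    and eq: "\<And>q. q \<in> paramD \<Longrightarrow> h q = g q"
  shows "(h has_derivative (\<lambda>_. 0)) (at p within paramD)"
proof -
  obtain D where D: "(g has_derivative D) (at p)" using assms(1) by (auto simp: differentiable_def)
  have pin: "p \<in> paramD" using assms by (cases p) (auto simp: paramD_def)
  define S where "S = {q::real\<times>real. 0 < fst q \<and> 0 < snd q \<and> fst q + snd q < 1}"
  have oS: "open S" unfolding S_def
    by (intro open_Collect_conj open_Collect_less continuous_intros)
  have pS: "p \<in> S" using assms by (simp add: S_def)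
  have SD: "S \<subseteq> paramD" by (auto simp: S_def paramD_def)
  have "(\<forall>q\<in>S. g q \<le> g p) \<or> (\<forall>q\<in>S. g p \<le> g q)"
  proof (rule disjE[OF ext])
    assume a: "\<forall>q\<in>paramD. h q \<le> h p"
    have "\<forall>q\<in>S. g q \<le> g p"
    proof
      fix q assume "q \<in> S" then have "q \<in> paramD" using SD by blast
      then show "g q \<le> g p" using a eq pin by metis
    qed
    then show ?thesis by blast
  next
    assume a: "\<forall>q\<in>paramD. h p \<le> h q"
    have "\<forall>q\<in>S. g p \<le> g q"
    proof
      fix q assume "q \<in> S" then have "q \<in> paramD" using SD by blast
      then show "g p \<le> g q" using a eq pin by metis
    qed
    then show ?thesis by blast
  qed
  then have "D = (\<lambda>v. 0)"
    using differential_zero_maxmin[OF pS oS D] by auto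
  then have "(g has_derivative (\<lambda>v. 0)) (at p within paramD)"
    using D has_derivative_at_withinI by blast
  then show ?thesis
    using has_derivative_transform[of p paramD h g] pin eq by blast
qed


lemma cand_ext:
  fixes f F :: "pt \<Rightarrow> real"
  assumes Fd: "\<And>x. F differentiable (at x)" and eq: "\<And>x. x \<in> triangle T \<Longrightarrow> f x = F x"
    and p: "(a, b) \<in> paramD"
    and ext: "(\<forall>q\<in>paramD. f (tri_param T (fst q) (snd q)) \<le> f (tri_param T a b)) \<or>
              (\<forall>q\<in>paramD. f (tri_param T a b) \<le> f (tri_param T (fst q) (snd q)))"
  shows "tri_param T a b \<in> candidates f T"
proof -
  obtain v1 v2 v3 where T: "T = (v1, v2, v3)" by (cases T) auto
  have ab: "0 \<le> a" "0 \<le> b" "a + b \<le> 1" using p by (auto simp: paramD_def)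
  have eqD: "\<And>x y. (x, y) \<in> paramD \<Longrightarrow> f (tri_param T x y) = F (tri_param T x y)"
    using eq tri_param_in by blast
  consider (int) "0 < a" "0 < b" "a + b < 1" | (e1) "a = 0" "0 < b" "b < 1"
    | (e2) "b = 0" "0 < a" "a < 1" | (e3) "a + b = 1" "0 < a" "a < 1"
    | (w1) "a = 0" "b = 0" | (w2) "a = 1" "b = 0" | (w3) "a = 0" "b = 1"
    using ab by linarith
  then show ?thesis
  proof cases
    case int
    have "((\<lambda>q. f (tri_param T (fst q) (snd q))) has_derivative (\<lambda>_. 0)) (at (a, b) within paramD)"
      using int_fermat[OF diff2[OF Fd, of T "(a,b)"], of "\<lambda>q. f (tri_param T (fst q) (snd q))"]
        int ext eqD by auto
    then show ?thesis unfolding candidates_def using p by blast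
  next
    case e1
    have "((\<lambda>s. f (tri_param T 0 s)) has_real_derivative 0) (at b within {0..1})"
    proof (rule edge_fermat[of "\<lambda>s. F (tri_param T 0 s)"])
      show "(\<lambda>s. F (tri_param T 0 s)) differentiable (at b)"
        using diff1[OF Fd, of T 0 0 0 1] by simp
      show "(\<forall>s\<in>{0..1}. f (tri_param T 0 s) \<le> f (tri_param T 0 b)) \<or>
            (\<forall>s\<in>{0..1}. f (tri_param T 0 b) \<le> f (tri_param T 0 s))"
        using ext e1 by (auto simp: paramD_def)
      show "\<And>s. s \<in> {0..1} \<Longrightarrow> f (tri_param T 0 s) = F (tri_param T 0 s)"
        using eqD by (auto simp: paramD_def)
    qed (use e1 in auto)
    then show ?thesis unfolding candidates_def using e1 by auto
  next
    case e2
    have "((\<lambda>s. f (tri_param T s 0)) has_real_derivative 0) (at a within {0..1})"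
    proof (rule edge_fermat[of "\<lambda>s. F (tri_param T s 0)"])
      show "(\<lambda>s. F (tri_param T s 0)) differentiable (at a)"
        using diff1[OF Fd, of T 0 1 0 0] by simp
      show "(\<forall>s\<in>{0..1}. f (tri_param T s 0) \<le> f (tri_param T a 0)) \<or>
            (\<forall>s\<in>{0..1}. f (tri_param T a 0) \<le> f (tri_param T s 0))"
        using ext e2 by (auto simp: paramD_def)
      show "\<And>s. s \<in> {0..1} \<Longrightarrow> f (tri_param T s 0) = F (tri_param T s 0)"
        using eqD by (auto simp: paramD_def)
    qed (use e2 in auto)
    then show ?thesis unfolding candidates_def using e2 by auto
  next
    case e3
    have bb: "b = 1 - a" using e3 by simp
    have "((\<lambda>s. f (tri_param T s (1 - s))) has_real_derivative 0) (at a within {0..1})"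
    proof (rule edge_fermat[of "\<lambda>s. F (tri_param T s (1 - s))"])
      show "(\<lambda>s. F (tri_param T s (1 - s))) differentiable (at a)"
        using diff1[OF Fd, of T 0 1 1 "-1"] by simp
      show "(\<forall>s\<in>{0..1}. f (tri_param T s (1 - s)) \<le> f (tri_param T a (1 - a))) \<or>
            (\<forall>s\<in>{0..1}. f (tri_param T a (1 - a)) \<le> f (tri_param T s (1 - s)))"
        using ext bb by (auto simp: paramD_def)
      show "\<And>s. s \<in> {0..1} \<Longrightarrow> f (tri_param T s (1 - s)) = F (tri_param T s (1 - s))"
        using eqD by (auto simp: paramD_def)
    qed (use e3 in auto)
    then show ?thesis unfolding candidates_def using e3 bb by auto
  next
    case w1 then show ?thesis by (simp add: candidates_def T tri_param_def)
  next
    case w2 then show ?thesis by (simp add: candidates_def T tri_param_def)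
  next
    case w3 then show ?thesis by (simp add: candidates_def T tri_param_def)
  qed
qed


lemma tri_ext:
  fixes f F :: "pt \<Rightarrow> real"
  assumes Fd: "\<And>x. F differentiable (at x)" and eq: "\<And>x. x \<in> triangle T \<Longrightarrow> f x = F x"
    and v: "v \<in> triangle T"
  shows "(\<exists>c\<in>candidates f T. f v \<le> f c) \<and> (\<exists>c\<in>candidates f T. f c \<le> f v)"
proof -
  define H where "H = (\<lambda>q. F (tri_param T (fst q) (snd q)))"
  have cont: "continuous_on paramD H"
    unfolding H_def
    by (intro continuous_at_imp_continuous_on ballI differentiable_imp_continuous_within diff2[OF Fd])
  have "(0, 0) \<in> paramD" by (simp add: paramD_def)
  then have ne: "paramD \<noteq> {}" by blast
  have eqD: "\<And>q. q \<in> paramD \<Longrightarrow> f (tri_param T (fst q) (snd q)) = H q"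
    unfolding H_def using eq tri_param_in by (metis prod.collapse)
  obtain \<alpha> \<beta> where ab: "(\<alpha>, \<beta>) \<in> paramD" "v = tri_param T \<alpha> \<beta>"
    using triangle_param[OF v] by blast
  obtain p where p: "p \<in> paramD" "\<forall>q\<in>paramD. H q \<le> H p"
    using continuous_attains_sup[OF paramD_compact ne cont] by blast
  obtain r where r: "r \<in> paramD" "\<forall>q\<in>paramD. H r \<le> H q"
    using continuous_attains_inf[OF paramD_compact ne cont] by blast
  have c1: "tri_param T (fst p) (snd p) \<in> candidates f T"
    by (rule cand_ext[OF Fd eq]) (use p eqD in auto)
  have c2: "tri_param T (fst r) (snd r) \<in> candidates f T"
    by (rule cand_ext[OF Fd eq]) (use r eqD in auto)
  have "f v \<le> f (tri_param T (fst p) (snd p))"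
    using ab p eqD[of "(\<alpha>, \<beta>)"] eqD[of p] by auto
  moreover have "f (tri_param T (fst r) (snd r)) \<le> f v"
    using ab r eqD[of "(\<alpha>, \<beta>)"] eqD[of r] by auto
  ultimately show ?thesis using c1 c2 by blast
qed

theorem theorem1:
  fixes K :: nat
    and G :: "nat \<Rightarrow> pt set"
    and lam :: "nat \<Rightarrow> pt \<Rightarrow> real"
    and Tris :: "tri set"
    and Sub :: "tri \<Rightarrow> tri set"
    and M C :: "pt set"
  assumes "\<forall>k\<le>K. finite (G k) \<and> (\<forall>g\<in>G k. on_lattice (cellw K k) g)"
    and "finite Tris"
    and "\<forall>T\<in>Tris. nondegenerate T"
    and "M = (\<Union>T\<in>Tris. triangle T)"
    and "\<forall>T\<in>Tris. finite (Sub T) \<and> (\<Union>S\<in>Sub T. triangle S) = triangle T \<and>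
           (\<forall>S\<in>Sub T. nondegenerate S \<and> (\<exists>a. triangle S \<subseteq> cell0 K a))"
    and "C = (\<Union>T\<in>Tris. \<Union>S\<in>Sub T. candidates (spline K G lam) S)"
  shows "\<forall>v\<in>M. (INF c\<in>C. spline K G lam c) \<le> spline K G lam v \<and>
                spline K G lam v \<le> (SUP c\<in>C. spline K G lam c)"
proof
  fix v assume vM: "v \<in> M"
  define f where "f = spline K G lam"
  define B where "B = (\<Sum>k\<le>K. \<Sum>g\<in>G k. \<bar>lam k g\<bar>)"
  have bd: "\<And>x. \<bar>f x\<bar> \<le> B" unfolding f_def B_def by (rule spline_bound)
  have ba: "bdd_above (f ` C)" by (rule bdd_aboveI[of _ B]) (use bd abs_le_D1 in blast)
  have bb: "bdd_below (f ` C)" by (rule bdd_belowI[of _ "-B"]) (smt (verit) bd imageE)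
  obtain T where T: "T \<in> Tris" "v \<in> triangle T" using vM assms(4) by blast
  obtain S where S: "S \<in> Sub T" "v \<in> triangle S" using T assms(5) by blast
  obtain a where a: "triangle S \<subseteq> cell0 K a" using S T assms(5) by blast
  have lat: "\<forall>k\<le>K. \<forall>g\<in>G k. on_lattice (cellw K k) g" and fin: "\<forall>k\<le>K. finite (G k)"
    using assms(1) by auto
  have ex: "(\<exists>c\<in>candidates f S. f v \<le> f c) \<and> (\<exists>c\<in>candidates f S. f c \<le> f v)"
  proof (rule tri_ext[OF Fsp_diff[OF fin]])
    show "\<And>x. x \<in> triangle S \<Longrightarrow> f x = Fsp K G lam a x"
      unfolding f_def using spline_Fsp[OF lat] a by blast
  qed (rule S(2))
  have sub: "candidates f S \<subseteq> C" using assms(6) T S f_def by blast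
  from ex obtain c1 c2 where c: "c1 \<in> C" "f v \<le> f c1" "c2 \<in> C" "f c2 \<le> f v"
    using sub by blast
  have "(INF c\<in>C. f c) \<le> f v" using cINF_lower[OF bb c(3)] c(4) by linarith
  moreover have "f v \<le> (SUP c\<in>C. f c)" using cSUP_upper[OF c(1) ba] c(2) by linarith
  ultimately show "(INF c\<in>C. spline K G lam c) \<le> spline K G lam v \<and>
                spline K G lam v \<le> (SUP c\<in>C. spline K G lam c)" unfolding f_def by simp
qed

end
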